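(* Let $S\in\mathrm{End}(V)$ be a linear map with operator norm $\|S\|<1$. For $w\in\widehat W$ let $V_w^{(S)}=(S-w)(A)=\{Sx-w(x)\mid x\in A\}$. Then the sets $V_w^{(S)}$, $w\in\widehat W$, are pairwise disjoint, and their closures cover $V$: \[V=\bigcup_{w\in\widehat W}\overline{V_w^{(S)}}.\]
   Context: $(V,\langle\cdot,\cdot\rangle)$ is a finite-dimensional real Euclidean vector space and $W$ is an irreducible Weyl group acting on $V$ as a crystallographic reflection group, with simple roots $\alpha_1,\dots,\alpha_l$ ($l=\dim V$), highest root $\alpha_{\max}$, $\alpha_0:=-\alpha_{\max}$, and $\alpha^\vee=2\alpha/\langle\alpha,\alpha\rangle$. The open Weyl alcove is $A=\{x\in V\mid\langle\alpha_i,x\rangle+\delta_{i,0}>0,\ i=0,\dots,l\}$. The affine Weyl group $\widehat W$ is the group of affine transformations generated by $s_i(x)=x-(\langle\alpha_i,x\rangle+\delta_{i,0})\alpha_i^\vee$, $i=0,\dots,l$; equivalently $\widehat W=\Lambda\rtimes W$ with $\Lambda=\mathbb Z[\alpha_1^\vee,\dots,\alpha_l^\vee]$ acting by translations. *)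

theory Defs
  imports "HOL-Analysis.Analysis"
begin

definition refl :: "'a::real_inner \<Rightarrow> 'a \<Rightarrow> 'a" where
  "refl a x = x - (2 * (a \<bullet> x) / (a \<bullet> a)) *\<^sub>R a"

definition coroot :: "'a::real_inner \<Rightarrow> 'a" where
  "coroot a = (2 / (a \<bullet> a)) *\<^sub>R a"

definition root_system :: "'a::euclidean_space set \<Rightarrow> bool" where
  "root_system R \<longleftrightarrow> finite R \<and> 0 \<notin> R \<and> span R = UNIV \<and>
     (\<forall>a\<in>R. refl a ` R \<subseteq> R) \<and>
     (\<forall>a\<in>R. \<forall>b\<in>R. 2 * (a \<bullet> b) / (b \<bullet> b) \<in> \<int>) \<and>
     (\<forall>a\<in>R. \<forall>c::real. c *\<^sub>R a \<in> R \<longrightarrow> c = 1 \<or> c = -1)"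

definition irreducible_rs :: "'a::euclidean_space set \<Rightarrow> bool" where
  "irreducible_rs R \<longleftrightarrow> \<not> (\<exists>R1 R2. R1 \<noteq> {} \<and> R2 \<noteq> {} \<and> R = R1 \<union> R2 \<and>
       (\<forall>a\<in>R1. \<forall>b\<in>R2. a \<bullet> b = 0))"

definition simple_roots :: "'a::euclidean_space set \<Rightarrow> nat \<Rightarrow> (nat \<Rightarrow> 'a) \<Rightarrow> bool" where
  "simple_roots R l alpha \<longleftrightarrow> (\<forall>i\<in>{1..l}. alpha i \<in> R) \<and> inj_on alpha {1..l} \<and>
     independent (alpha ` {1..l}) \<and>
     (\<forall>b\<in>R. \<exists>c::nat \<Rightarrow> int. b = (\<Sum>i=1..l. of_int (c i) *\<^sub>R alpha i) \<and>
        ((\<forall>i. c i \<ge> 0) \<or> (\<forall>i. c i \<le> 0)))"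

definition highest_root :: "'a::euclidean_space set \<Rightarrow> nat \<Rightarrow> (nat \<Rightarrow> 'a) \<Rightarrow> 'a \<Rightarrow> bool" where
  "highest_root R l alpha amax \<longleftrightarrow> amax \<in> R \<and>
     (\<forall>b\<in>R. \<exists>c::nat \<Rightarrow> nat. amax - b = (\<Sum>i=1..l. of_nat (c i) *\<^sub>R alpha i))"

definition aff_refl :: "'a::real_inner \<Rightarrow> real \<Rightarrow> 'a \<Rightarrow> 'a" where
  "aff_refl a k x = x - (a \<bullet> x + k) *\<^sub>R coroot a"

text \<open>Generators s_0, ..., s_l (alpha 0 = - highest root).\<close>
definition sgen :: "(nat \<Rightarrow> 'a::real_inner) \<Rightarrow> nat \<Rightarrow> 'a \<Rightarrow> 'a" where
  "sgen alpha i = aff_refl (alpha i) (if i = 0 then 1 else 0)"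

text \<open>The affine Weyl group: the group generated by s_0..s_l
  (each s_i is an involution, so the generated monoid is the generated group).\<close>
inductive_set affine_weyl :: "(nat \<Rightarrow> 'a::real_inner) \<Rightarrow> nat \<Rightarrow> ('a \<Rightarrow> 'a) set"
  for alpha :: "nat \<Rightarrow> 'a" and l :: nat where
  id_in: "id \<in> affine_weyl alpha l"
| gen: "w \<in> affine_weyl alpha l \<Longrightarrow> i \<le> l \<Longrightarrow> sgen alpha i \<circ> w \<in> affine_weyl alpha l"

definition alcove :: "(nat \<Rightarrow> 'a::real_inner) \<Rightarrow> nat \<Rightarrow> 'a set" where
  "alcove alpha l = {x. \<forall>i\<le>l. alpha i \<bullet> x + (if i = 0 then 1 else 0) > 0}"

end

theory Submission
  imports Defs
begin


primrec evw :: "(nat \<Rightarrow> 'a::real_inner) \<Rightarrow> nat list \<Rightarrow> 'a \<Rightarrow> 'a" where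
  "evw alpha [] = id"
| "evw alpha (i # ws) = sgen alpha i \<circ> evw alpha ws"

lemma evw_append: "evw alpha (xs @ ys) = evw alpha xs \<circ> evw alpha ys"
  by (induction xs) auto

lemma affine_weyl_char:
  "w \<in> affine_weyl alpha l \<longleftrightarrow> (\<exists>ws. set ws \<subseteq> {..l} \<and> w = evw alpha ws)"
proof
  assume "w \<in> affine_weyl alpha l"
  then show "\<exists>ws. set ws \<subseteq> {..l} \<and> w = evw alpha ws"
  proof induction
    case id_in
    then show ?case by (intro exI[of _ "[]"]) auto
  next
    case (gen w i)
    then obtain ws where "set ws \<subseteq> {..l}" "w = evw alpha ws" by blast
    then show ?case using gen by (intro exI[of _ "i # ws"]) auto
  qed
next
  assume "\<exists>ws. set ws \<subseteq> {..l} \<and> w = evw alpha ws"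
  then obtain ws where ws: "set ws \<subseteq> {..l}" "w = evw alpha ws" by blast
  have "evw alpha ws \<in> affine_weyl alpha l" using ws(1)
    by (induction ws) (auto intro: affine_weyl.intros)
  then show "w \<in> affine_weyl alpha l" using ws by simp
qed

definition fa :: "'a::real_inner \<Rightarrow> int \<Rightarrow> 'a \<Rightarrow> real" where
  "fa b m x = b \<bullet> x + of_int m"

definition dl :: "nat \<Rightarrow> int" where "dl i = (if i = 0 then 1 else 0)"

lemma fa_inj:
  assumes "\<forall>x. fa b m x = fa b' m' x" shows "b = b' \<and> m = m'"
proof -
  have m: "m = m'" using assms[rule_format, of 0] by (simp add: fa_def)
  have "\<forall>x. (b - b') \<bullet> x = 0" using assms m by (simp add: fa_def inner_diff_left)
  then have "(b - b') \<bullet> (b - b') = 0" by blast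
  then show ?thesis using m by simp
qed

lemma fa_seg: "fa b m (x + t *\<^sub>R (p - x)) = (1 - t) * fa b m x + t * fa b m p"
  by (simp add: fa_def inner_add_right inner_diff_right algebra_simps)

locale aw =
  fixes R :: "'a::euclidean_space set" and alpha :: "nat \<Rightarrow> 'a" and amax :: 'a and l :: nat
  assumes rs: "root_system R" and ldim: "l = DIM('a)"
    and sr: "simple_roots R l alpha" and hr: "highest_root R l alpha amax"
    and a0: "alpha 0 = - amax"
begin

abbreviation A where "A \<equiv> alcove alpha l"
abbreviation s where "s i \<equiv> sgen alpha i"
abbreviation ev where "ev \<equiv> evw alpha"
abbreviation fi where "fi i \<equiv> fa (alpha i) (dl i)"

lemma sgen_eq: "s i x = x - fi i x *\<^sub>R coroot (alpha i)"
  by (simp add: sgen_def aff_refl_def fa_def dl_def)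

lemma A_iff: "x \<in> A \<longleftrightarrow> (\<forall>i\<le>l. fi i x > 0)"
  by (simp add: alcove_def fa_def dl_def)

lemma finR: "finite R" and zR: "0 \<notin> R" and reflR: "\<And>a b. a \<in> R \<Longrightarrow> b \<in> R \<Longrightarrow> refl a b \<in> R"
  and intR: "\<And>a b. a \<in> R \<Longrightarrow> b \<in> R \<Longrightarrow> 2 * (a \<bullet> b) / (b \<bullet> b) \<in> \<int>"
  and redR: "\<And>a c. a \<in> R \<Longrightarrow> c *\<^sub>R a \<in> R \<Longrightarrow> c = 1 \<or> c = -1"
  using rs unfolding root_system_def by blast+

lemma negR: assumes "b \<in> R" shows "- b \<in> R"
proof -
  have "b \<noteq> 0" using assms zR by auto
  then have "refl b b = - b" by (simp add: refl_def scaleR_2)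
  then show ?thesis using reflR[OF assms assms] by simp
qed

lemma lpos: "l \<ge> 1" using ldim DIM_positive by (metis One_nat_def Suc_leI)

lemma sr_mem: "i \<in> {1..l} \<Longrightarrow> alpha i \<in> R" using sr unfolding simple_roots_def by blast
lemma sr_inj: "inj_on alpha {1..l}" using sr unfolding simple_roots_def by blast
lemma sr_ind: "independent (alpha ` {1..l})" using sr unfolding simple_roots_def by blast
lemma sr_rep: "b \<in> R \<Longrightarrow> \<exists>c::nat \<Rightarrow> int. b = (\<Sum>i=1..l. of_int (c i) *\<^sub>R alpha i) \<and>
        ((\<forall>i. c i \<ge> 0) \<or> (\<forall>i. c i \<le> 0))" using sr unfolding simple_roots_def by blast
lemma amaxR: "amax \<in> R" using hr unfolding highest_root_def by blast
lemma hr_rep: "b \<in> R \<Longrightarrow> \<exists>c::nat \<Rightarrow> nat. amax - b = (\<Sum>i=1..l. of_nat (c i) *\<^sub>R alpha i)"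
  using hr unfolding highest_root_def by blast

lemma alphaR: "i \<le> l \<Longrightarrow> alpha i \<in> R"
  using sr_mem[of i] a0 negR[OF amaxR] by (cases "i = 0") auto

lemma alpha_nz: "i \<le> l \<Longrightarrow> alpha i \<noteq> 0" using alphaR zR by metis

lemma alpha_sq_pos: "i \<le> l \<Longrightarrow> alpha i \<bullet> alpha i > 0" using alpha_nz by simp

lemma alpha_coroot: "i \<le> l \<Longrightarrow> alpha i \<bullet> coroot (alpha i) = 2"
  using alpha_sq_pos[of i] by (simp add: coroot_def)

lemma fi_s: "i \<le> l \<Longrightarrow> fi i (s i x) = - fi i x"
  using alpha_coroot[of i] by (simp add: sgen_eq fa_def inner_diff_right algebra_simps)

lemma s_s: "i \<le> l \<Longrightarrow> s i (s i x) = x"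
  using fi_s[of i x] by (simp add: sgen_eq[of i "s i x"]) (simp add: sgen_eq)

lemma fa_s:
  assumes "i \<le> l" "b \<in> R"
  shows "\<exists>b'\<in>R. \<exists>m'. \<forall>x. fa b m (s i x) = fa b' m' x"
proof -
  let ?a = "alpha i"
  have aR: "?a \<in> R" using alphaR assms by simp
  have pos: "?a \<bullet> ?a > 0" using alpha_sq_pos assms by simp
  obtain k :: int where k: "2 * (b \<bullet> ?a) / (?a \<bullet> ?a) = of_int k"
    using intR[OF assms(2) aR] by (auto elim: Ints_cases)
  show ?thesis
  proof (intro bexI exI allI)
    fix x
    have "fa b m (s i x) = b \<bullet> x - (?a \<bullet> x + of_int (dl i)) * (2 * (b \<bullet> ?a) / (?a \<bullet> ?a)) + m"
      using pos by (simp add: sgen_eq fa_def coroot_def inner_diff_right inner_commute field_simps)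
    also have "\<dots> = fa (refl ?a b) (m - dl i * k) x"
      using pos k by (simp add: fa_def refl_def inner_diff_left inner_diff_right inner_commute field_simps)
    finally show "fa b m (s i x) = fa (refl ?a b) (m - dl i * k) x" .
  qed (use reflR[OF aR assms(2)] in auto)
qed

lemma fa_ev:
  assumes "set ws \<subseteq> {..l}" "b \<in> R"
  shows "\<exists>b'\<in>R. \<exists>m'. \<forall>x. fa b m (ev ws x) = fa b' m' x"
  using assms
proof (induction ws arbitrary: b m)
  case Nil then show ?case by auto
next
  case (Cons i ws)
  obtain b1 m1 where b1: "b1 \<in> R" "\<forall>x. fa b m (s i x) = fa b1 m1 x"
    using fa_s[of i b m] Cons.prems by auto
  obtain b2 m2 where "b2 \<in> R" "\<forall>x. fa b1 m1 (ev ws x) = fa b2 m2 x"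
    using Cons.IH[of b1 m1] Cons.prems b1 by auto
  then show ?case using b1 by auto
qed

lemma s_aff: "i \<le> l \<Longrightarrow> s i (y + v) = s i y + (v - (alpha i \<bullet> v) *\<^sub>R coroot (alpha i))"
  by (simp add: sgen_eq fa_def inner_add_right algebra_simps)

lemma s_lin_inner:
  assumes "i \<le> l"
  shows "(v - (alpha i \<bullet> v) *\<^sub>R coroot (alpha i)) \<bullet> (w - (alpha i \<bullet> w) *\<^sub>R coroot (alpha i)) = v \<bullet> w"
  using alpha_sq_pos[OF assms]
  by (simp add: coroot_def inner_diff_left inner_diff_right inner_commute field_simps)

lemma ev_aff:
  assumes "set ws \<subseteq> {..l}"
  shows "\<exists>L. linear L \<and> (\<forall>v w. L v \<bullet> L w = v \<bullet> w) \<and> (\<forall>y v. ev ws (y + v) = ev ws y + L v)"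
  using assms
proof (induction ws)
  case Nil show ?case by (intro exI[of _ id] conjI linear_id) auto
next
  case (Cons i ws)
  then obtain L where L: "linear L" "\<forall>v w. L v \<bullet> L w = v \<bullet> w" "\<forall>y v. ev ws (y + v) = ev ws y + L v"
    by auto
  let ?M = "\<lambda>v. v - (alpha i \<bullet> v) *\<^sub>R coroot (alpha i)"
  have lm: "linear ?M" by (auto intro!: linearI simp: inner_add_right scaleR_add_left algebra_simps)
  show ?case
  proof (intro exI[of _ "?M \<circ> L"] conjI allI)
    show "linear (?M \<circ> L)" using lm L(1) by (rule linear_compose[rotated])
    fix v w show "(?M \<circ> L) v \<bullet> (?M \<circ> L) w = v \<bullet> w"
      using s_lin_inner[of i "L v" "L w"] L(2) Cons.prems by simp
  next
    fix y v show "ev (i # ws) (y + v) = ev (i # ws) y + (?M \<circ> L) v"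
      using L(3) s_aff[of i] Cons.prems by simp
  qed
qed

lemma ev_dist:
  assumes "set ws \<subseteq> {..l}" shows "dist (ev ws x) (ev ws y) = dist x y"
proof -
  obtain L where L: "linear L" "\<forall>v w. L v \<bullet> L w = v \<bullet> w" "\<forall>y v. ev ws (y + v) = ev ws y + L v"
    using ev_aff[OF assms] by auto
  have "ev ws x = ev ws y + L (x - y)" using L(3)[rule_format, of y "x - y"] by simp
  then have "dist (ev ws x) (ev ws y) = norm (L (x - y))" by (simp add: dist_norm)
  also have "\<dots> = norm (x - y)" using L(2) by (simp add: norm_eq_sqrt_inner)
  finally show ?thesis by (simp add: dist_norm)
qed

lemma ev_cont:
  assumes "set ws \<subseteq> {..l}" shows "continuous_on UNIV (ev ws)"
proof -
  obtain L where L: "linear L" "\<forall>y v. ev ws (y + v) = ev ws y + L v"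
    using ev_aff[OF assms] by auto
  have "ev ws = (\<lambda>x. ev ws 0 + L x)"
  proof
    fix x show "ev ws x = ev ws 0 + L x" using L(2)[rule_format, of 0 x] by simp
  qed
  moreover have "continuous_on UNIV (\<lambda>x. ev ws 0 + L x)"
    using L(1) by (intro continuous_intros linear_continuous_on) (simp add: linear_conv_bounded_linear)
  ultimately show ?thesis by metis
qed

lemma ev_rev: "set ws \<subseteq> {..l} \<Longrightarrow> ev (rev ws) (ev ws x) = x"
proof (induction ws arbitrary: x)
  case Nil then show ?case by simp
next
  case (Cons i ws)
  have "ev (rev (i # ws)) (ev (i # ws) x) = ev (rev ws) (s i (s i (ev ws x)))"
    by (simp add: evw_append)
  also have "\<dots> = ev (rev ws) (ev ws x)" using Cons.prems s_s[of i] by simp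
  also have "\<dots> = x" using Cons by simp
  finally show ?case .
qed

end


context aw begin

lemma A_simple: "x \<in> A \<Longrightarrow> k \<in> {1..l} \<Longrightarrow> alpha k \<bullet> x > 0"
  using A_iff[of x] by (auto simp: fa_def dl_def)

lemma A_amax: "x \<in> A \<Longrightarrow> amax \<bullet> x < 1"
  using A_iff[of x] a0 by (auto simp: fa_def dl_def)

lemma le_amax:
  assumes "b \<in> R" "\<forall>k\<in>{1..l}. alpha k \<bullet> W \<ge> 0"
  shows "b \<bullet> W \<le> amax \<bullet> W"
proof -
  obtain c where c: "amax - b = (\<Sum>i=1..l. of_nat (c i) *\<^sub>R alpha i)" using hr_rep[OF assms(1)] by blast
  have e: "(amax - b) \<bullet> W = (\<Sum>i=1..l. of_nat (c i) * (alpha i \<bullet> W))" by (simp add: c inner_sum_left)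
  have "0 \<le> (\<Sum>i=1..l. of_nat (c i) * (alpha i \<bullet> W))" using assms(2) by (intro sum_nonneg) auto
  then show ?thesis using e by (simp add: inner_diff_left)
qed

lemma root_A:
  assumes "b \<in> R"
  shows "(\<forall>x\<in>A. 0 < b \<bullet> x \<and> b \<bullet> x < 1) \<or> (\<forall>x\<in>A. -1 < b \<bullet> x \<and> b \<bullet> x < 0)"
proof -
  have lt1: "b' \<bullet> x < 1" if "b' \<in> R" "x \<in> A" for b' x
    using le_amax[OF that(1), of x] A_simple[OF that(2)] A_amax[OF that(2)] by force
  obtain c where c: "b = (\<Sum>i=1..l. of_int (c i) *\<^sub>R alpha i)" and sg: "(\<forall>i. c i \<ge> 0) \<or> (\<forall>i. c i \<le> 0)"
    using sr_rep[OF assms] by blast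
  have bx: "b \<bullet> x = (\<Sum>i=1..l. of_int (c i) * (alpha i \<bullet> x))" for x by (simp add: c inner_sum_left)
  have "\<exists>j\<in>{1..l}. c j \<noteq> 0"
  proof (rule ccontr)
    assume "\<not> ?thesis"
    then have "b = 0" unfolding c by (intro sum.neutral) auto
    then show False using assms zR by simp
  qed
  then obtain j where j: "j \<in> {1..l}" "c j \<noteq> 0" by blast
  from sg show ?thesis
  proof
    assume nn: "\<forall>i. c i \<ge> 0"
    have "0 < b \<bullet> x" if x: "x \<in> A" for x
    proof -
      have "0 < of_int (c j) * (alpha j \<bullet> x)" using nn j A_simple[OF x j(1)]
        by (intro mult_pos_pos) (auto simp: order.strict_iff_order)
      also have "\<dots> \<le> (\<Sum>i=1..l. of_int (c i) * (alpha i \<bullet> x))"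
        using nn A_simple[OF x] j(1) by (intro member_le_sum) (auto intro!: mult_nonneg_nonneg simp: less_imp_le)
      finally show ?thesis using bx by simp
    qed
    then show ?thesis using lt1 assms by auto
  next
    assume np: "\<forall>i. c i \<le> 0"
    have "b \<bullet> x < 0" if x: "x \<in> A" for x
    proof -
      have "0 < of_int (- c j) * (alpha j \<bullet> x)" using np j A_simple[OF x j(1)]
        by (intro mult_pos_pos) (auto simp: order.strict_iff_order)
      also have "\<dots> \<le> (\<Sum>i=1..l. of_int (- c i) * (alpha i \<bullet> x))"
        using np A_simple[OF x] j(1) by (intro member_le_sum) (auto intro!: mult_nonpos_nonneg simp: less_imp_le)
      also have "\<dots> = - (b \<bullet> x)" using bx by (simp add: sum_negf)
      finally show ?thesis by simp
    qed
    moreover have "-1 < b \<bullet> x" if "x \<in> A" for x using lt1[OF negR[OF assms] that] by simp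
    ultimately show ?thesis by auto
  qed
qed

lemma fa_A:
  assumes "b \<in> R" "x \<in> A" "x' \<in> A"
  shows "fa b m x \<noteq> 0 \<and> (fa b m x > 0 \<longleftrightarrow> fa b m x' > 0)"
proof -
  have bnds: "-1 < b\<bullet>x \<and> b\<bullet>x < 1 \<and> -1 < b\<bullet>x' \<and> b\<bullet>x' < 1 \<and> (0 < b\<bullet>x \<longleftrightarrow> 0 < b\<bullet>x') \<and> b\<bullet>x \<noteq> 0 \<and> b\<bullet>x' \<noteq> 0"
    using root_A[OF assms(1)] assms(2,3) by fastforce
  consider "m \<ge> 1" | "m \<le> -1" | "m = 0" by linarith
  then show ?thesis
  proof cases
    case 1 then have "real_of_int m \<ge> 1" by simp
    then show ?thesis using bnds unfolding fa_def by linarith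
  next
    case 2 then have "real_of_int m \<le> -1" by simp
    then show ?thesis using bnds unfolding fa_def by linarith
  next
    case 3 then show ?thesis using bnds unfolding fa_def by simp
  qed
qed

lemma fa_ev_A:
  assumes "set ws \<subseteq> {..l}" "b \<in> R" "x \<in> A" "x' \<in> A"
  shows "fa b m (ev ws x) \<noteq> 0 \<and> (fa b m (ev ws x) > 0 \<longleftrightarrow> fa b m (ev ws x') > 0)"
proof -
  obtain b' m' where "b' \<in> R" "\<forall>x. fa b m (ev ws x) = fa b' m' x" using fa_ev[OF assms(1,2)] by blast
  then show ?thesis using fa_A[of b' x x' m'] assms by simp
qed

lemma span_alpha: "span (alpha ` {1..l}) = UNIV"
proof -
  have "card (alpha ` {1..l}) = DIM('a)" using sr_inj ldim by (simp add: card_image)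
  then show ?thesis using sr_ind
    by (metis card_ge_dim_independent dim_UNIV order_refl span_superset subset_UNIV subset_antisym)
qed

lemma coweight_ex:
  assumes "k \<in> {1..l}" shows "\<exists>w. \<forall>i\<in>{1..l}. alpha i \<bullet> w = (if i = k then 1 else 0)"
proof -
  let ?S = "alpha ` ({1..l} - {k})"
  have "dim ?S \<le> card ?S" by (rule dim_le_card) (auto simp: span_superset)
  also have "card ?S \<le> card ({1..l} - {k})" by (rule card_image_le) simp
  also have "\<dots> = l - 1" using assms by simp
  finally have dS: "dim ?S < DIM('a)" using ldim lpos by linarith
  obtain x where x: "x \<noteq> 0" "\<And>y. y \<in> span ?S \<Longrightarrow> orthogonal x y"
    using orthogonal_to_subspace_exists[OF dS] by blast
  have ortho: "alpha i \<bullet> x = 0" if "i \<in> {1..l}" "i \<noteq> k" for i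
    using x(2)[of "alpha i"] that span_base[of "alpha i" ?S] by (auto simp: orthogonal_def inner_commute)
  have nz: "alpha k \<bullet> x \<noteq> 0"
  proof
    assume "alpha k \<bullet> x = 0"
    then have "\<forall>y\<in>alpha ` {1..l}. orthogonal x y" using ortho
      by (auto simp: orthogonal_def inner_commute) (metis atLeastAtMost_iff)
    then have "orthogonal x x" using span_alpha orthogonal_to_span by blast
    then show False using x(1) by (simp add: orthogonal_def)
  qed
  show ?thesis
    by (intro exI[of _ "(1 / (alpha k \<bullet> x)) *\<^sub>R x"]) (use nz ortho in auto)
qed

definition om where "om k = (SOME w. \<forall>i\<in>{1..l}. alpha i \<bullet> w = (if i = k then 1 else 0))"

lemma om: "k \<in> {1..l} \<Longrightarrow> i \<in> {1..l} \<Longrightarrow> alpha i \<bullet> om k = (if i = k then 1 else 0)"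
  using someI_ex[OF coweight_ex[of k]] unfolding om_def by blast

lemma comb_om:
  assumes "K \<subseteq> {1..l}"
  shows "(\<Sum>i=1..l. r i *\<^sub>R alpha i) \<bullet> (\<Sum>k\<in>K. om k) = (\<Sum>k\<in>K. r k)"
proof -
  have "(\<Sum>i=1..l. r i *\<^sub>R alpha i) \<bullet> (\<Sum>k\<in>K. om k) = (\<Sum>k\<in>K. \<Sum>i=1..l. r i * (alpha i \<bullet> om k))"
    by (simp add: inner_sum_left inner_sum_right sum.swap[of _ "{1..l}"])
  also have "\<dots> = (\<Sum>k\<in>K. r k)"
  proof (rule sum.cong[OF refl])
    fix k assume k: "k \<in> K"
    then have k1: "k \<in> {1..l}" using assms by auto
    have "(\<Sum>i=1..l. r i * (alpha i \<bullet> om k)) = (\<Sum>i\<in>{1..l}. if i = k then r k else 0)"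
      by (rule sum.cong) (auto simp: om[OF k1])
    also have "\<dots> = r k" using k1 by simp
    finally show "(\<Sum>i=1..l. r i * (alpha i \<bullet> om k)) = r k" .
  qed
  finally show ?thesis .
qed

lemma alpha_om:
  assumes "K \<subseteq> {1..l}" "i \<in> {1..l}"
  shows "alpha i \<bullet> (\<Sum>k\<in>K. om k) = (if i \<in> K then 1 else 0)"
proof -
  have "alpha i \<bullet> (\<Sum>k\<in>K. om k) = (\<Sum>k\<in>K. if i = k then 1 else 0)"
    using assms by (auto simp: inner_sum_right om intro!: sum.cong)
  also have "\<dots> = (if i \<in> K then 1 else 0)" using assms finite_subset[OF assms(1)] by auto
  finally show ?thesis .
qed

end


context aw begin

lemma rootW:
  assumes "b \<in> R" "K \<subseteq> {1..l}"
  obtains c :: "nat \<Rightarrow> int" where "b = (\<Sum>i=1..l. of_int (c i) *\<^sub>R alpha i)"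
    "(\<forall>i. c i \<ge> 0) \<or> (\<forall>i. c i \<le> 0)" "b \<bullet> (\<Sum>k\<in>K. om k) = of_int (\<Sum>k\<in>K. c k)"
proof -
  obtain c :: "nat \<Rightarrow> int" where c: "b = (\<Sum>i=1..l. of_int (c i) *\<^sub>R alpha i)"
    and sg: "(\<forall>i. c i \<ge> 0) \<or> (\<forall>i. c i \<le> 0)" using sr_rep[OF assms(1)] by blast
  have "b \<bullet> (\<Sum>k\<in>K. om k) = (\<Sum>k\<in>K. of_int (c k))"
    using comb_om[OF assms(2), of "\<lambda>i. of_int (c i)"] c by simp
  then show ?thesis using that[OF c sg] by simp
qed

lemma sum_uniform_zero:
  fixes c :: "nat \<Rightarrow> int"
  assumes "(\<forall>i. c i \<ge> 0) \<or> (\<forall>i. c i \<le> 0)" "finite K" "(\<Sum>k\<in>K. c k) = 0"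
  shows "\<forall>k\<in>K. c k = 0"
  using assms(1)
proof
  assume "\<forall>i. c i \<ge> 0" then show ?thesis using assms(2,3) sum_nonneg_eq_0_iff by blast
next
  assume np: "\<forall>i. c i \<le> 0"
  have "(\<Sum>k\<in>K. - c k) = 0" using assms(3) by (simp add: sum_negf)
  then have "\<forall>k\<in>K. - c k = 0" using np assms(2) sum_nonneg_eq_0_iff[of K "\<lambda>k. - c k"] by auto
  then show ?thesis by auto
qed

lemma Wpos: "K \<subseteq> {1..l} \<Longrightarrow> \<forall>k\<in>{1..l}. alpha k \<bullet> (\<Sum>k\<in>K. om k) \<ge> 0"
  using alpha_om by simp

lemma absW: "b \<in> R \<Longrightarrow> K \<subseteq> {1..l} \<Longrightarrow> \<bar>b \<bullet> (\<Sum>k\<in>K. om k)\<bar> \<le> amax \<bullet> (\<Sum>k\<in>K. om k)"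
  using le_amax[OF _ Wpos, of b K] le_amax[OF negR Wpos, of b K] by (simp add: abs_le_iff)

lemma int_ge1: "(z::int) \<noteq> 0 \<Longrightarrow> 1 \<le> \<bar>real_of_int z\<bar>" by linarith

lemma Nq_pos:
  assumes j: "j \<in> {1..l}"
  shows "\<exists>q N. N > 0 \<and> (\<forall>i\<le>l. fi i q \<ge> 0) \<and> fi j q = 0 \<and>
    (\<forall>b\<in>R. \<forall>m. fa b m q = 0 \<longrightarrow> (b = alpha j \<and> m = dl j) \<or> (b = - alpha j \<and> m = - dl j)) \<and>
    (\<forall>b\<in>R. \<forall>m. fa b m q \<noteq> 0 \<longrightarrow> 1/N \<le> \<bar>fa b m q\<bar>)"
proof -
  define K where "K = {1..l} - {j}"
  have K: "K \<subseteq> {1..l}" by (auto simp: K_def)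
  have fK: "finite K" using K finite_subset by blast
  define W where "W = (\<Sum>k\<in>K. om k)"
  obtain cm where cmW: "amax \<bullet> W = of_int (\<Sum>k\<in>K. cm k)"
    using rootW[OF amaxR K] unfolding W_def by metis
  define Mz where "Mz = (\<Sum>k\<in>K. cm k)"
  have "0 \<le> amax \<bullet> W" using absW[OF amaxR K] unfolding W_def by linarith
  then have Mz0: "Mz \<ge> 0" using cmW unfolding Mz_def by (metis of_int_0_le_iff)
  define N where "N = real_of_int (Mz + 1)"
  have N: "N > 0" using Mz0 N_def by simp
  define q where "q = (1/N) *\<^sub>R W"
  have aq: "alpha i \<bullet> q = (if i \<in> K then 1/N else 0)" if "i \<in> {1..l}" for i
    using alpha_om[OF K that] by (simp add: q_def W_def)
  have amq: "amax \<bullet> q = of_int Mz / N" by (simp add: q_def cmW Mz_def)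
  have fi_ge: "\<forall>i\<le>l. fi i q \<ge> 0"
  proof (intro allI impI)
    fix i assume i: "i \<le> l"
    show "fi i q \<ge> 0"
    proof (cases "i = 0")
      case True
      have "of_int Mz / N \<le> 1" using N N_def by (simp add: field_simps)
      then show ?thesis using True a0 amq by (simp add: fa_def dl_def)
    next
      case False then show ?thesis using aq[of i] i N by (simp add: fa_def dl_def)
    qed
  qed
  have fij: "fi j q = 0" using aq[OF j] j by (simp add: K_def fa_def dl_def)
  have main: "(fa b m q = 0 \<longrightarrow> (b = alpha j \<and> m = dl j) \<or> (b = - alpha j \<and> m = - dl j)) \<and>
      (fa b m q \<noteq> 0 \<longrightarrow> 1/N \<le> \<bar>fa b m q\<bar>)" if b: "b \<in> R" for b m
  proof -
    obtain c where c: "b = (\<Sum>i=1..l. of_int (c i) *\<^sub>R alpha i)"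
      and sg: "(\<forall>i. c i \<ge> 0) \<or> (\<forall>i. c i \<le> 0)" and cW: "b \<bullet> W = of_int (\<Sum>k\<in>K. c k)"
      using rootW[OF b K] unfolding W_def by metis
    define nz where "nz = (\<Sum>k\<in>K. c k)"
    have "\<bar>real_of_int nz\<bar> \<le> real_of_int Mz" using absW[OF b K] cW cmW unfolding nz_def Mz_def W_def by simp
    then have nzb: "\<bar>nz\<bar> \<le> Mz" by (metis of_int_abs of_int_le_iff)
    have fq: "fa b m q = of_int (nz + m * (Mz + 1)) / N"
      using N by (simp add: fa_def q_def cW nz_def N_def field_simps)
    show ?thesis
    proof (intro conjI impI)
      assume "fa b m q \<noteq> 0"
      then have "nz + m * (Mz + 1) \<noteq> 0" using fq by (metis div_0 of_int_0)
      then have "1 \<le> \<bar>real_of_int (nz + m * (Mz + 1))\<bar>" by (rule int_ge1)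
      then show "1/N \<le> \<bar>fa b m q\<bar>" using fq N by (simp add: divide_right_mono)
    next
      assume "fa b m q = 0"
      then have z: "nz + m * (Mz + 1) = 0" using fq N by (metis divide_eq_0_iff less_irrefl of_int_eq_0_iff)
      have m0: "m = 0"
      proof (rule ccontr)
        assume "m \<noteq> 0"
        then have "\<bar>m\<bar> * (Mz + 1) \<ge> 1 * (Mz + 1)" using Mz0 by (intro mult_right_mono) auto
        then have "\<bar>m * (Mz + 1)\<bar> \<ge> Mz + 1" using Mz0 by (simp add: abs_mult)
        then show False using z nzb by linarith
      qed
      then have "nz = 0" using z by simp
      then have ck: "\<forall>k\<in>K. c k = 0" using sum_uniform_zero[OF sg fK] nz_def by simp
      have "b = (\<Sum>i\<in>{1..l}. if i = j then of_int (c j) *\<^sub>R alpha j else 0)"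
        unfolding c by (rule sum.cong) (use ck in \<open>auto simp: K_def\<close>)
      also have "\<dots> = of_int (c j) *\<^sub>R alpha j" using j by simp
      finally have bj: "b = of_int (c j) *\<^sub>R alpha j" .
      then have "real_of_int (c j) = 1 \<or> real_of_int (c j) = -1"
        using redR[OF sr_mem[OF j]] b bj by blast
      then have "b = alpha j \<or> b = - alpha j" using bj by auto
      moreover have "dl j = 0" using j by (simp add: dl_def)
      ultimately show "(b = alpha j \<and> m = dl j) \<or> (b = - alpha j \<and> m = - dl j)" using m0 by auto
    qed
  qed
  show ?thesis using N fi_ge fij main by blast
qed

lemma eq_amax:
  assumes "b \<in> R" "b \<bullet> (\<Sum>k\<in>{1..l}. om k) = amax \<bullet> (\<Sum>k\<in>{1..l}. om k)"
  shows "b = amax"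
proof -
  obtain c where c: "amax - b = (\<Sum>i=1..l. of_nat (c i) *\<^sub>R alpha i)" using hr_rep[OF assms(1)] by blast
  have "(amax - b) \<bullet> (\<Sum>k\<in>{1..l}. om k) = (\<Sum>k\<in>{1..l}. real (c k))"
    unfolding c by (rule comb_om) simp
  then have "(\<Sum>k\<in>{1..l}. real (c k)) = 0" using assms(2) by (simp add: inner_diff_left)
  then have "(\<Sum>k\<in>{1..l}. c k) = 0" by (metis of_nat_0 of_nat_eq_iff of_nat_sum)
  then have "\<forall>k\<in>{1..l}. c k = 0" by simp
  then have "amax - b = 0" unfolding c by (intro sum.neutral) auto
  then show ?thesis by simp
qed

lemma Nq_zero:
  shows "\<exists>q N. N > 0 \<and> (\<forall>i\<le>l. fi i q \<ge> 0) \<and> fi 0 q = 0 \<and>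
    (\<forall>b\<in>R. \<forall>m. fa b m q = 0 \<longrightarrow> (b = alpha 0 \<and> m = dl 0) \<or> (b = - alpha 0 \<and> m = - dl 0)) \<and>
    (\<forall>b\<in>R. \<forall>m. fa b m q \<noteq> 0 \<longrightarrow> 1/N \<le> \<bar>fa b m q\<bar>)"
proof -
  define K where "K = {1..l}"
  have K: "K \<subseteq> {1..l}" by (auto simp: K_def)
  have fK: "finite K" using K finite_subset by blast
  define W where "W = (\<Sum>k\<in>K. om k)"
  obtain cm where cmW: "amax \<bullet> W = of_int (\<Sum>k\<in>K. cm k)"
    using rootW[OF amaxR K] unfolding W_def by metis
  define Mz where "Mz = (\<Sum>k\<in>K. cm k)"
  have one: "1 \<in> {1..l}" using lpos by simp
  obtain c' where c': "amax - alpha 1 = (\<Sum>i=1..l. of_nat (c' i) *\<^sub>R alpha i)"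
    using hr_rep[OF sr_mem[OF one]] by blast
  have "(amax - alpha 1) \<bullet> W = (\<Sum>k\<in>K. real (c' k))"
    unfolding c' W_def K_def by (rule comb_om) simp
  moreover have "alpha 1 \<bullet> W = 1" using alpha_om[OF K one] one by (simp add: W_def K_def)
  moreover have "0 \<le> (\<Sum>k\<in>K. real (c' k))" by (intro sum_nonneg) auto
  ultimately have "amax \<bullet> W \<ge> 1" by (simp add: inner_diff_left)
  then have "real_of_int Mz \<ge> 1" using cmW Mz_def by simp
  then have Mz1: "Mz \<ge> 1" by (metis of_int_1 of_int_le_iff)
  define N where "N = real_of_int Mz"
  have N: "N > 0" using Mz1 N_def by simp
  define q where "q = (1/N) *\<^sub>R W"
  have aq: "alpha i \<bullet> q = 1/N" if "i \<in> {1..l}" for i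
    using alpha_om[OF K that] that by (simp add: q_def W_def K_def)
  have amq: "amax \<bullet> q = 1" using N by (simp add: q_def cmW Mz_def N_def)
  have fi_ge: "\<forall>i\<le>l. fi i q \<ge> 0"
  proof (intro allI impI)
    fix i assume i: "i \<le> l"
    show "fi i q \<ge> 0"
    proof (cases "i = 0")
      case True then show ?thesis using a0 amq by (simp add: fa_def dl_def)
    next
      case False then show ?thesis using aq[of i] i N by (simp add: fa_def dl_def)
    qed
  qed
  have fi0: "fi 0 q = 0" using a0 amq by (simp add: fa_def dl_def)
  have main: "(fa b m q = 0 \<longrightarrow> (b = alpha 0 \<and> m = dl 0) \<or> (b = - alpha 0 \<and> m = - dl 0)) \<and>
      (fa b m q \<noteq> 0 \<longrightarrow> 1/N \<le> \<bar>fa b m q\<bar>)" if b: "b \<in> R" for b m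
  proof -
    obtain c where c: "b = (\<Sum>i=1..l. of_int (c i) *\<^sub>R alpha i)"
      and sg: "(\<forall>i. c i \<ge> 0) \<or> (\<forall>i. c i \<le> 0)" and cW: "b \<bullet> W = of_int (\<Sum>k\<in>K. c k)"
      using rootW[OF b K] unfolding W_def by metis
    define nz where "nz = (\<Sum>k\<in>K. c k)"
    have "\<bar>real_of_int nz\<bar> \<le> real_of_int Mz" using absW[OF b K] cW cmW unfolding nz_def Mz_def W_def by simp
    then have nzb: "\<bar>nz\<bar> \<le> Mz" by (metis of_int_abs of_int_le_iff)
    have fq: "fa b m q = of_int (nz + m * Mz) / N"
      using N by (simp add: fa_def q_def cW nz_def N_def field_simps)
    show ?thesis
    proof (intro conjI impI)
      assume "fa b m q \<noteq> 0"
      then have "nz + m * Mz \<noteq> 0" using fq by (metis div_0 of_int_0)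
      then have "1 \<le> \<bar>real_of_int (nz + m * Mz)\<bar>" by (rule int_ge1)
      then show "1/N \<le> \<bar>fa b m q\<bar>" using fq N by (simp add: divide_right_mono)
    next
      assume "fa b m q = 0"
      then have z: "nz + m * Mz = 0" using fq N by (metis divide_eq_0_iff less_irrefl of_int_eq_0_iff)
      have mb: "\<bar>m\<bar> \<le> 1"
      proof (rule ccontr)
        assume "\<not> \<bar>m\<bar> \<le> 1"
        then have "\<bar>m\<bar> * Mz \<ge> 2 * Mz" using Mz1 by (intro mult_right_mono) auto
        then have "\<bar>m * Mz\<bar> \<ge> 2 * Mz" using Mz1 by (simp add: abs_mult)
        then show False using z nzb Mz1 by linarith
      qed
      then consider "m = 0" | "m = 1" | "m = -1" by linarith
      then show "(b = alpha 0 \<and> m = dl 0) \<or> (b = - alpha 0 \<and> m = - dl 0)"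
      proof cases
        case 1
        then have "nz = 0" using z by simp
        then have ck: "\<forall>k\<in>K. c k = 0" using sum_uniform_zero[OF sg fK] nz_def by simp
        have "b = 0" unfolding c by (rule sum.neutral) (use ck in \<open>auto simp: K_def\<close>)
        then show ?thesis using b zR by simp
      next
        case 2
        then have "nz = - Mz" using z by simp
        then have "(- b) \<bullet> W = amax \<bullet> W" using cW cmW nz_def Mz_def by simp
        then have "- b = amax" using eq_amax[OF negR[OF b]] by (simp add: W_def K_def)
        then have "b = alpha 0" using a0 by (metis minus_minus)
        then show ?thesis using 2 by (simp add: dl_def)
      next
        case 3
        then have "nz = Mz" using z by simp
        then have "b \<bullet> W = amax \<bullet> W" using cW cmW nz_def Mz_def by simp
        then have "b = amax" using eq_amax[OF b] by (simp add: W_def K_def)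
        then show ?thesis using 3 a0 by (simp add: dl_def)
      qed
    qed
  qed
  show ?thesis using N fi_ge fi0 main by blast
qed

lemma Nq:
  assumes "j \<le> l"
  shows "\<exists>q N. N > 0 \<and> (\<forall>i\<le>l. fi i q \<ge> 0) \<and> fi j q = 0 \<and>
    (\<forall>b\<in>R. \<forall>m. fa b m q = 0 \<longrightarrow> (b = alpha j \<and> m = dl j) \<or> (b = - alpha j \<and> m = - dl j)) \<and>
    (\<forall>b\<in>R. \<forall>m. fa b m q \<noteq> 0 \<longrightarrow> 1/N \<le> \<bar>fa b m q\<bar>)"
proof (cases "j = 0")
  case True then show ?thesis using Nq_zero by simp
next
  case False then show ?thesis using Nq_pos[of j] assms by simp
qed

lemma distinct_walls:
  assumes "i \<le> l" "j \<le> l" "i \<noteq> j"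
  shows "\<not> ((alpha i = alpha j \<and> dl i = dl j) \<or> (alpha i = - alpha j \<and> dl i = - dl j))"
proof
  assume h: "(alpha i = alpha j \<and> dl i = dl j) \<or> (alpha i = - alpha j \<and> dl i = - dl j)"
  show False
  proof (cases "i = 0 \<or> j = 0")
    case True then show False using h assms by (auto simp: dl_def)
  next
    case False
    then have ij: "i \<in> {1..l}" "j \<in> {1..l}" using assms by auto
    then have "alpha i \<noteq> alpha j" using sr_inj assms(3) by (auto dest: inj_onD)
    with h have e: "alpha i = - alpha j" by auto
    have "alpha j \<noteq> 0" using alpha_nz assms by auto
    have "alpha j \<noteq> - alpha j"
    proof
      assume "alpha j = - alpha j"
      then have "alpha j + alpha j = 0" by (metis add.right_inverse)
      then have "2 *\<^sub>R alpha j = 0" by (simp add: scaleR_2)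
      then show False using \<open>alpha j \<noteq> 0\<close> by simp
    qed
    then have "alpha j \<in> alpha ` {1..l} - {alpha i}" using e ij by auto
    then have "- alpha j \<in> span (alpha ` {1..l} - {alpha i})" by (intro span_neg span_base)
    then have "alpha i \<in> span (alpha ` {1..l} - {alpha i})" using e by metis
    then have "dependent (alpha ` {1..l})" using ij unfolding dependent_def by blast
    then show False using sr_ind by simp
  qed
qed

lemma Npt:
  assumes j: "j \<le> l"
  shows "\<exists>p\<in>A. \<forall>b\<in>R. \<forall>m. (fa b m p > 0) \<noteq> (fa b m (s j p) > 0) \<longrightarrow>
           (b = alpha j \<and> m = dl j) \<or> (b = - alpha j \<and> m = - dl j)"
proof -
  obtain q N where N: "N > 0" and fge: "\<forall>i\<le>l. fi i q \<ge> 0" and fj: "fi j q = 0"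
    and z: "\<forall>b\<in>R. \<forall>m. fa b m q = 0 \<longrightarrow> (b = alpha j \<and> m = dl j) \<or> (b = - alpha j \<and> m = - dl j)"
    and nz: "\<forall>b\<in>R. \<forall>m. fa b m q \<noteq> 0 \<longrightarrow> 1/N \<le> \<bar>fa b m q\<bar>"
    using Nq[OF j] by blast
  define v where "v = coroot (alpha j)"
  define B where "B = (\<Sum>b\<in>R. \<bar>b \<bullet> v\<bar>)"
  have Bge: "\<bar>b \<bullet> v\<bar> \<le> B" if "b \<in> R" for b
    unfolding B_def using that finR by (intro member_le_sum) auto
  have B0: "B \<ge> 0" unfolding B_def by (intro sum_nonneg) auto
  define t where "t = 1 / (N * (B + 1))"
  have t0: "t > 0" using N B0 by (simp add: t_def)
  have tB1: "t * B = (B/(B+1)) * (1/N)" by (simp add: t_def)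
  have "B/(B+1) < 1" using B0 by simp
  then have "(B/(B+1)) * (1/N) < 1 * (1/N)" using N by (intro mult_strict_right_mono) auto
  then have tB: "t * B < 1/N" unfolding tB1 by simp
  have tb: "t * \<bar>b \<bullet> v\<bar> < 1/N" if "b \<in> R" for b
    using mult_left_mono[OF Bge[OF that], of t] t0 tB by linarith
  define p where "p = q + t *\<^sub>R v"
  have fap: "fa b m p = fa b m q + t * (b \<bullet> v)" for b m
    by (simp add: p_def fa_def inner_add_right)
  have av: "alpha j \<bullet> v = 2" using alpha_coroot[OF j] by (simp add: v_def)
  have sp: "s j p = q - t *\<^sub>R v"
  proof -
    have "fi j p = 2 * t" using fap[of "alpha j" "dl j"] fj av by simp
    then have "s j p = p - (2 * t) *\<^sub>R v" by (simp add: sgen_eq v_def)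
    also have "(2*t) *\<^sub>R v = t *\<^sub>R v + t *\<^sub>R v" by (metis mult_2 scaleR_add_left)
    also have "p - (t *\<^sub>R v + t *\<^sub>R v) = q - t *\<^sub>R v" by (simp add: p_def algebra_simps)
    finally show ?thesis .
  qed
  have fasp: "fa b m (s j p) = fa b m q - t * (b \<bullet> v)" for b m
    by (simp add: sp fa_def inner_diff_right)
  have pA: "p \<in> A"
    unfolding A_iff
  proof (intro allI impI)
    fix i assume i: "i \<le> l"
    show "fi i p > 0"
    proof (cases "i = j")
      case True then show ?thesis using fap[of "alpha j" "dl j"] fj av t0 by simp
    next
      case False
      have "fi i q \<noteq> 0" using z alphaR[OF i] distinct_walls[OF i j False] by blast
      then have "1/N \<le> fi i q" using nz alphaR[OF i] fge i by fastforce
      moreover have "t * \<bar>alpha i \<bullet> v\<bar> < 1/N" using tb alphaR[OF i] by blast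
      moreover have "- (t * \<bar>alpha i \<bullet> v\<bar>) \<le> t * (alpha i \<bullet> v)" using t0
        by (metis abs_ge_minus_self abs_mult abs_of_pos minus_le_iff)
      ultimately show ?thesis using fap[of "alpha i" "dl i"] by linarith
    qed
  qed
  show ?thesis
  proof (intro bexI[OF _ pA] ballI allI impI)
    fix b m assume b: "b \<in> R" and ne: "(fa b m p > 0) \<noteq> (fa b m (s j p) > 0)"
    show "(b = alpha j \<and> m = dl j) \<or> (b = - alpha j \<and> m = - dl j)"
    proof (rule ccontr)
      assume "\<not> ?thesis"
      then have "fa b m q \<noteq> 0" using z b by blast
      then have g: "1/N \<le> \<bar>fa b m q\<bar>" using nz b by blast
      have h: "\<bar>t * (b \<bullet> v)\<bar> < 1/N" using tb[OF b] t0 by (simp add: abs_mult)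
      show False using ne g h fap[of b m] fasp[of b m] by (auto simp: abs_if split: if_splits)
    qed
  qed
qed

end


context aw begin

lemma A_ne: "\<exists>p. p \<in> A" using Npt[of 0] by auto

lemma commute_s:
  assumes ws: "set ws \<subseteq> {..l}" and i: "i \<le> l" and j: "j \<le> l"
    and e: "e = 1 \<or> e = -1" and h: "\<forall>y. fi i (ev ws y) = e * fi j y"
  shows "s i \<circ> ev ws = ev ws \<circ> s j"
proof -
  obtain L where L: "linear L" "\<forall>v w. L v \<bullet> L w = v \<bullet> w" "\<forall>y v. ev ws (y + v) = ev ws y + L v"
    using ev_aff[OF ws] by auto
  have evv: "ev ws v = ev ws 0 + L v" for v using L(3)[rule_format, of 0 v] by simp
  have Lv: "alpha i \<bullet> L v = e * (alpha j \<bullet> v)" for v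
  proof -
    have "fi i (ev ws v) = e * fi j v" using h by simp
    moreover have "fi i (ev ws 0) = e * fi j 0" using h by simp
    ultimately show ?thesis using evv[of v] by (simp add: fa_def inner_add_right algebra_simps)
  qed
  have e2: "e * e = 1" using e by auto
  have nL: "norm (L v) = norm v" for v using L(2) by (simp add: norm_eq_sqrt_inner)
  have "inj L"
  proof (rule injI)
    fix a b assume "L a = L b"
    then have "L (a - b) = 0" using L(1) by (simp add: linear_diff)
    then have "norm (a - b) = 0" using nL[of "a - b"] by simp
    then show "a = b" by simp
  qed
  then have "surj L" using L(1) by (metis linear_injective_imp_surjective)
  then obtain y where y: "L y = alpha i" by (metis surjD)
  have ai0: "alpha i \<noteq> 0" using alpha_nz i by simp
  have n1: "norm (alpha i) \<le> norm (alpha j)"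
  proof -
    have "norm (alpha i) ^ 2 = alpha i \<bullet> L y" using y by (simp add: power2_norm_eq_inner)
    also have "\<dots> = e * (alpha j \<bullet> y)" by (rule Lv)
    also have "\<dots> \<le> \<bar>alpha j \<bullet> y\<bar>" using e by auto
    also have "\<dots> \<le> norm (alpha j) * norm y" by (rule Cauchy_Schwarz_ineq2)
    also have "norm y = norm (alpha i)" using nL[of y] y by simp
    finally have "norm (alpha i) * norm (alpha i) \<le> norm (alpha j) * norm (alpha i)"
      by (simp add: power2_eq_square)
    then show ?thesis using ai0 by simp
  qed
  have n2: "norm (alpha j) \<le> norm (alpha i)"
  proof -
    have "alpha i \<bullet> L (alpha j) = e * (alpha j \<bullet> alpha j)" by (rule Lv)
    then have "norm (alpha j) ^ 2 = e * (alpha i \<bullet> L (alpha j))" using e2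
      by (simp add: power2_norm_eq_inner algebra_simps)
    also have "\<dots> \<le> \<bar>alpha i \<bullet> L (alpha j)\<bar>" using e by auto
    also have "\<dots> \<le> norm (alpha i) * norm (L (alpha j))" by (rule Cauchy_Schwarz_ineq2)
    finally have "norm (alpha j) * norm (alpha j) \<le> norm (alpha i) * norm (alpha j)"
      by (simp add: power2_eq_square nL)
    moreover have "alpha j \<noteq> 0" using alpha_nz j by simp
    ultimately show ?thesis by simp
  qed
  have sq: "alpha i \<bullet> alpha i = alpha j \<bullet> alpha j"
    using n1 n2 by (metis antisym power2_norm_eq_inner)
  have "(L (alpha j) - e *\<^sub>R alpha i) \<bullet> (L (alpha j) - e *\<^sub>R alpha i) =
        L (alpha j) \<bullet> L (alpha j) - 2 * e * (alpha i \<bullet> L (alpha j)) + e * e * (alpha i \<bullet> alpha i)"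
    by (simp add: inner_diff_left inner_diff_right inner_commute algebra_simps)
  also have "\<dots> = 0" using L(2) Lv[of "alpha j"] sq e2 by (simp add: algebra_simps)
  finally have La: "L (alpha j) = e *\<^sub>R alpha i" by simp
  have Lc: "L (coroot (alpha j)) = e *\<^sub>R coroot (alpha i)"
    using La sq L(1) by (simp add: coroot_def linear_cmul)
  show ?thesis
  proof
    fix y
    have "ev ws (s j y) = ev ws (y + (- fi j y) *\<^sub>R coroot (alpha j))" by (simp add: sgen_eq)
    also have "\<dots> = ev ws y + L ((- fi j y) *\<^sub>R coroot (alpha j))" using L(3) by blast
    also have "\<dots> = ev ws y - (e * fi j y) *\<^sub>R coroot (alpha i)" using Lc L(1) by (simp add: linear_cmul linear_neg)
    also have "\<dots> = s i (ev ws y)" using h by (simp add: sgen_eq)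
    finally show "(s i \<circ> ev ws) y = (ev ws \<circ> s j) y" by simp
  qed
qed

lemma exchange:
  assumes x: "x \<in> A" and i: "i \<le> l"
  shows "set ws \<subseteq> {..l} \<Longrightarrow> fi i (ev ws x) < 0 \<Longrightarrow>
     \<exists>ws'. set ws' \<subseteq> {..l} \<and> length ws' < length ws \<and> s i \<circ> ev ws = ev ws'"
proof (induction ws rule: rev_induct)
  case Nil then show ?case using x i A_iff by auto
next
  case (snoc j ws0)
  have ws0: "set ws0 \<subseteq> {..l}" and j: "j \<le> l" using snoc.prems by auto
  have evs: "ev (ws0 @ [j]) = ev ws0 \<circ> s j" by (simp add: evw_append)
  show ?case
  proof (cases "fi i (ev ws0 x) < 0")
    case True
    obtain ws' where ws': "set ws' \<subseteq> {..l}" "length ws' < length ws0" "s i \<circ> ev ws0 = ev ws'"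
      using snoc.IH[OF ws0 True] by blast
    show ?thesis
    proof (intro exI[of _ "ws' @ [j]"] conjI)
      show "s i \<circ> ev (ws0 @ [j]) = ev (ws' @ [j])"
        using ws'(3) by (simp add: evw_append comp_assoc[symmetric])
    qed (use ws' j in auto)
  next
    case False
    have "fi i (ev ws0 x) \<noteq> 0" using fa_ev_A[OF ws0 alphaR[OF i] x x] by simp
    with False have pos: "fi i (ev ws0 x) > 0" by simp
    obtain b m where bm: "b \<in> R" "\<forall>y. fi i (ev ws0 y) = fa b m y"
      using fa_ev[OF ws0 alphaR[OF i], of "dl i"] by blast
    obtain b' m' where b'm': "b' \<in> R" "\<forall>y. fa b m (s j y) = fa b' m' y"
      using fa_s[OF j bm(1)] by blast
    have neg: "fa b' m' x < 0" using snoc.prems(2) evs bm(2) b'm'(2) by simp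
    obtain p where pA: "p \<in> A" and pp: "\<forall>b\<in>R. \<forall>m. (fa b m p > 0) \<noteq> (fa b m (s j p) > 0) \<longrightarrow>
           (b = alpha j \<and> m = dl j) \<or> (b = - alpha j \<and> m = - dl j)"
      using Npt[OF j] by blast
    have "fa b m p > 0" using fa_A[OF bm(1) x pA, of m] pos bm(2) by simp
    moreover have "\<not> fa b m (s j p) > 0" using fa_A[OF b'm'(1) x pA, of m'] neg b'm'(2) by auto
    ultimately have "(b = alpha j \<and> m = dl j) \<or> (b = - alpha j \<and> m = - dl j)" using pp bm(1) by blast
    then obtain e :: real where e: "e = 1 \<or> e = -1" "\<forall>y. fi i (ev ws0 y) = e * fi j y"
    proof
      assume "b = alpha j \<and> m = dl j"
      then show ?thesis using that[of 1] bm(2) by simp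
    next
      assume "b = - alpha j \<and> m = - dl j"
      then show ?thesis using that[of "-1"] bm(2) by (simp add: fa_def)
    qed
    have c: "s i \<circ> ev ws0 = ev ws0 \<circ> s j" by (rule commute_s[OF ws0 i j e])
    have "s i \<circ> ev (ws0 @ [j]) = ev ws0"
    proof
      fix y
      have "s i (ev ws0 (s j y)) = ev ws0 (s j (s j y))" using c by (metis comp_apply)
      then show "(s i \<circ> ev (ws0 @ [j])) y = ev ws0 y" using s_s[OF j] evs by simp
    qed
    then show ?thesis using ws0 by (intro exI[of _ ws0]) auto
  qed
qed

definition minw where
  "minw ws \<longleftrightarrow> set ws \<subseteq> {..l} \<and> (\<forall>ws'. set ws' \<subseteq> {..l} \<and> ev ws' = ev ws \<longrightarrow> length ws \<le> length ws')"

lemma exists_minw: "set ws \<subseteq> {..l} \<Longrightarrow> \<exists>ws0. minw ws0 \<and> ev ws0 = ev ws"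
proof -
  assume ws: "set ws \<subseteq> {..l}"
  obtain ws0 where "(set ws0 \<subseteq> {..l} \<and> ev ws0 = ev ws) \<and>
     (\<forall>y. (set y \<subseteq> {..l} \<and> ev y = ev ws) \<longrightarrow> length ws0 \<le> length y)"
    using ex_has_least_nat[of "\<lambda>w. set w \<subseteq> {..l} \<and> ev w = ev ws" ws length] ws by blast
  then show ?thesis unfolding minw_def by metis
qed

lemma minw_Cons: "minw (i # ws) \<Longrightarrow> minw ws"
  unfolding minw_def
proof (intro conjI allI impI)
  fix ws' assume m: "set (i # ws) \<subseteq> {..l} \<and> (\<forall>ws'. set ws' \<subseteq> {..l} \<and> ev ws' = ev (i # ws) \<longrightarrow> length (i # ws) \<le> length ws')"
    and w: "set ws' \<subseteq> {..l} \<and> ev ws' = ev ws"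
  then have "length (i # ws) \<le> length (i # ws')" by (metis evw.simps(2) insert_subset list.set(2))
  then show "length ws \<le> length ws'" by simp
qed auto

lemma minw_neg:
  assumes m: "minw (i # ws)" and x: "x \<in> A"
  shows "fi i (ev (i # ws) x) < 0"
proof -
  have i: "i \<le> l" and ws: "set ws \<subseteq> {..l}" using m by (auto simp: minw_def)
  have "\<not> fi i (ev ws x) < 0"
  proof
    assume "fi i (ev ws x) < 0"
    then obtain ws' where "set ws' \<subseteq> {..l}" "length ws' < length ws" "s i \<circ> ev ws = ev ws'"
      using exchange[OF x i ws] by blast
    then show False using m unfolding minw_def by (metis evw.simps(2) impossible_Cons le_trans less_imp_le_nat not_le)
  qed
  moreover have "fi i (ev ws x) \<noteq> 0" using fa_ev_A[OF ws alphaR[OF i] x x] by simp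
  ultimately show ?thesis using fi_s[OF i] by simp
qed

definition Cl where "Cl = {x. \<forall>i\<le>l. fi i x \<ge> 0}"

lemma seg_A:
  assumes x: "x \<in> Cl" and p: "p \<in> A" and t: "0 < t" "t \<le> 1"
  shows "x + t *\<^sub>R (p - x) \<in> A"
  unfolding A_iff
proof (intro allI impI)
  fix k assume k: "k \<le> l"
  have "0 \<le> (1 - t) * fi k x" using x k t by (simp add: Cl_def)
  moreover have "0 < t * fi k p" using p k t A_iff by simp
  ultimately show "fi k (x + t *\<^sub>R (p - x)) > 0" by (simp add: fa_seg)
qed

lemma minw_neg_Cl:
  assumes m: "minw (i # ws)" and x: "x \<in> Cl"
  shows "fi i (ev (i # ws) x) \<le> 0"
proof (rule ccontr)
  assume gx: "\<not> ?thesis"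
  have iws: "set (i # ws) \<subseteq> {..l}" using m by (simp add: minw_def)
  have i: "i \<le> l" using iws by simp
  obtain b m' where bm: "b \<in> R" "\<forall>y. fi i (ev (i # ws) y) = fa b m' y"
    using fa_ev[OF iws alphaR[OF i], of "dl i"] by blast
  obtain p where p: "p \<in> A" using A_ne by blast
  have gp: "fa b m' p < 0" using minw_neg[OF m p] bm by simp
  have gx': "fa b m' x > 0" using gx bm by simp
  define t where "t = fa b m' x / (fa b m' x - fa b m' p)"
  have t: "0 < t" "t \<le> 1" using gp gx' by (auto simp: t_def field_simps)
  have "fa b m' (x + t *\<^sub>R (p - x)) < 0"
    using minw_neg[OF m seg_A[OF x p t]] bm by simp
  moreover have "fa b m' (x + t *\<^sub>R (p - x)) = 0"
  proof -
    have nz: "fa b m' x - fa b m' p \<noteq> 0" using gp gx' by simp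
    have "fa b m' (x + t *\<^sub>R (p - x)) = fa b m' x - t * (fa b m' x - fa b m' p)"
      unfolding fa_seg by (simp add: algebra_simps)
    also have "t * (fa b m' x - fa b m' p) = fa b m' x" unfolding t_def using nz by simp
    finally show ?thesis by simp
  qed
  ultimately show False by simp
qed

lemma refl_dist:
  assumes i: "i \<le> l" and z: "fi i z \<le> 0" and x: "fi i x \<ge> 0"
  shows "dist (s i z) x \<le> dist z x"
proof -
  let ?a = "alpha i"
  define c where "c = fi i z"
  define d where "d = fi i x"
  have pos: "?a \<bullet> ?a > 0" using alpha_sq_pos[OF i] .
  have e: "s i z - x = (z - x) - c *\<^sub>R coroot ?a" by (simp add: sgen_eq c_def)
  have za: "(z - x) \<bullet> ?a = c - d"
    unfolding c_def d_def fa_def inner_diff_left by (simp add: inner_commute)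
  have zx: "(z - x) \<bullet> coroot ?a = 2 / (?a \<bullet> ?a) * (c - d)"
    unfolding coroot_def inner_scaleR_right za ..
  have cc: "coroot ?a \<bullet> coroot ?a = 4 / (?a \<bullet> ?a)"
    using pos by (simp add: coroot_def power2_eq_square)
  have "(s i z - x) \<bullet> (s i z - x) = (z - x) \<bullet> (z - x) - 2 * c * ((z - x) \<bullet> coroot ?a) + c * c * (coroot ?a \<bullet> coroot ?a)"
    unfolding e by (simp add: inner_diff_left inner_diff_right inner_commute algebra_simps)
  also have "\<dots> = (z - x) \<bullet> (z - x) + 4 * c * d / (?a \<bullet> ?a)"
    unfolding zx cc using pos by (simp add: field_simps)
  also have "\<dots> \<le> (z - x) \<bullet> (z - x)"
  proof -
    have "c * d \<le> 0" using z x by (simp add: c_def d_def mult_nonpos_nonneg)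
    then have "4 * c * d / (?a \<bullet> ?a) \<le> 0" using pos by (simp add: divide_nonpos_pos)
    then show ?thesis by simp
  qed
  finally have "norm (s i z - x) ^ 2 \<le> norm (z - x) ^ 2" by (simp add: power2_norm_eq_inner)
  then have "norm (s i z - x) \<le> norm (z - x)" by (rule power2_le_imp_le) simp
  then show ?thesis by (simp add: dist_norm)
qed

lemma K_minw:
  assumes "minw ws" "x1 \<in> Cl" "x2 \<in> Cl"
  shows "dist x1 x2 \<le> dist (ev ws x1) x2"
  using assms(1)
proof (induction ws)
  case Nil then show ?case by simp
next
  case (Cons i ws)
  have i: "i \<le> l" using Cons.prems by (simp add: minw_def)
  have IH: "dist x1 x2 \<le> dist (ev ws x1) x2" using Cons.IH minw_Cons[OF Cons.prems] by blast
  let ?z = "ev (i # ws) x1"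
  have "fi i ?z \<le> 0" using minw_neg_Cl[OF Cons.prems assms(2)] .
  moreover have "fi i x2 \<ge> 0" using assms(3) i by (simp add: Cl_def)
  ultimately have "dist (s i ?z) x2 \<le> dist ?z x2" using refl_dist[OF i] by blast
  moreover have "s i ?z = ev ws x1" using s_s[OF i] by simp
  ultimately show ?case using IH by simp
qed

lemma K_gen:
  assumes "set ws \<subseteq> {..l}" "x1 \<in> Cl" "x2 \<in> Cl"
  shows "dist x1 x2 \<le> dist (ev ws x1) x2"
  using exists_minw[OF assms(1)] K_minw[OF _ assms(2,3)] by metis

lemma A_Cl: "A \<subseteq> Cl" unfolding Cl_def using A_iff by (auto intro: less_imp_le)

lemma T_stab:
  assumes "set ws \<subseteq> {..l}" "x \<in> A" "ev ws x \<in> A"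
  shows "ev ws = id"
proof -
  obtain ws0 where m: "minw ws0" "ev ws0 = ev ws" using exists_minw[OF assms(1)] by blast
  show ?thesis
  proof (cases ws0)
    case Nil then show ?thesis using m by simp
  next
    case (Cons i ws')
    then have "fi i (ev ws0 x) < 0" using minw_neg m(1) assms(2) by blast
    moreover have "i \<le> l" using m(1) Cons by (simp add: minw_def)
    ultimately show ?thesis using assms(3) m(2) A_iff by force
  qed
qed

end


context aw begin

definition E where "E p z = {(b, m). b \<in> R \<and> fa b m z * fa b m p < 0}"

lemma E_fin: "finite (E p z)"
proof -
  define X where "X = (\<Sum>b\<in>R. \<bar>b \<bullet> z\<bar> + \<bar>b \<bullet> p\<bar>)"
  define K where "K = \<lceil>X\<rceil>"
  have "E p z \<subseteq> R \<times> {-K..K}"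
  proof
    fix bm assume "bm \<in> E p z"
    then obtain b m where bm: "bm = (b, m)" "b \<in> R" "fa b m z * fa b m p < 0" by (auto simp: E_def)
    have c: "(0 < fa b m z \<and> fa b m p < 0) \<or> (fa b m z < 0 \<and> 0 < fa b m p)"
      using bm(3) by (simp add: mult_less_0_iff)
    have "\<bar>real_of_int m\<bar> \<le> \<bar>b \<bullet> z\<bar> + \<bar>b \<bullet> p\<bar>"
      using c abs_ge_self[of "b \<bullet> z"] abs_ge_minus_self[of "b \<bullet> z"]
        abs_ge_self[of "b \<bullet> p"] abs_ge_minus_self[of "b \<bullet> p"]
      unfolding fa_def by linarith
    also have "\<dots> \<le> X" unfolding X_def using bm(2) finR by (intro member_le_sum) auto
    also have "X \<le> real_of_int K" unfolding K_def by (rule le_of_int_ceiling)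
    finally have "\<bar>m\<bar> \<le> K" by (metis of_int_abs of_int_le_iff)
    then show "bm \<in> R \<times> {-K..K}" using bm by auto
  qed
  then show ?thesis by (rule finite_subset) (use finR in auto)
qed

lemma prod_neg_cong:
  fixes a a' x :: real
  shows "a \<noteq> 0 \<Longrightarrow> a' \<noteq> 0 \<Longrightarrow> (a > 0 \<longleftrightarrow> a' > 0) \<Longrightarrow> (x * a < 0 \<longleftrightarrow> x * a' < 0)"
  by (auto simp: mult_less_0_iff)

lemma E_indep:
  assumes p: "p \<in> A" and p': "p' \<in> A"
  shows "E p z = E p' z"
proof -
  have "fa b m z * fa b m p < 0 \<longleftrightarrow> fa b m z * fa b m p' < 0" if "b \<in> R" for b m
    using fa_A[OF that p p', of m] fa_A[OF that p' p, of m] by (intro prod_neg_cong) auto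
  then show ?thesis unfolding E_def by auto
qed

lemma E_step:
  assumes i: "i \<le> l" and z: "fi i z < 0"
  shows "\<exists>p\<in>A. card (E p (s i z)) < card (E p z)"
proof -
  obtain p where pA: "p \<in> A" and pp: "\<forall>b\<in>R. \<forall>m. (fa b m p > 0) \<noteq> (fa b m (s i p) > 0) \<longrightarrow>
           (b = alpha i \<and> m = dl i) \<or> (b = - alpha i \<and> m = - dl i)"
    using Npt[OF i] by blast
  have tau: "\<exists>bm'. bm' \<in> R \<times> UNIV \<and> (\<forall>y. fa (fst bm') (snd bm') y = fa (fst bm) (snd bm) (s i y))"
    if "bm \<in> R \<times> UNIV" for bm
  proof -
    have "fst bm \<in> R" using that by auto
    then obtain b' m' where "b' \<in> R" "\<forall>y. fa (fst bm) (snd bm) (s i y) = fa b' m' y"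
      using fa_s[OF i, of "fst bm" "snd bm"] by blast
    then show ?thesis by (intro exI[of _ "(b', m')"]) auto
  qed
  define \<tau> where "\<tau> bm = (SOME bm'. bm' \<in> R \<times> UNIV \<and> (\<forall>y. fa (fst bm') (snd bm') y = fa (fst bm) (snd bm) (s i y)))" for bm
  have \<tau>: "\<tau> bm \<in> R \<times> UNIV \<and> (\<forall>y. fa (fst (\<tau> bm)) (snd (\<tau> bm)) y = fa (fst bm) (snd bm) (s i y))"
    if "bm \<in> R \<times> UNIV" for bm
    unfolding \<tau>_def by (rule someI_ex) (rule tau[OF that])
  have ER: "E q w \<subseteq> R \<times> UNIV" for q w by (auto simp: E_def)
  have inj: "inj_on \<tau> (E p (s i z))"
  proof (rule inj_onI)
    fix u v assume u: "u \<in> E p (s i z)" and v: "v \<in> E p (s i z)" and e: "\<tau> u = \<tau> v"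
    have uv: "u \<in> R \<times> UNIV" "v \<in> R \<times> UNIV" using u v ER by auto
    have "fa (fst u) (snd u) (s i y) = fa (fst v) (snd v) (s i y)" for y
      using \<tau>[OF uv(1)] \<tau>[OF uv(2)] e by metis
    then have "fa (fst u) (snd u) y = fa (fst v) (snd v) y" for y
      using s_s[OF i, of y] by metis
    then have "fst u = fst v \<and> snd u = snd v" using fa_inj by blast
    then show "u = v" by (simp add: prod_eq_iff)
  qed
  have sub1: "\<tau> ` E p (s i z) \<subseteq> E (s i p) z"
  proof
    fix w assume "w \<in> \<tau> ` E p (s i z)"
    then obtain u where u: "u \<in> E p (s i z)" "w = \<tau> u" by blast
    obtain b m where bm: "u = (b, m)" "b \<in> R" "fa b m (s i z) * fa b m p < 0" using u(1) by (auto simp: E_def)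
    have t: "\<tau> u \<in> R \<times> UNIV" "\<forall>y. fa (fst (\<tau> u)) (snd (\<tau> u)) y = fa b m (s i y)"
      using \<tau>[of u] bm by auto
    have "fa (fst (\<tau> u)) (snd (\<tau> u)) (s i p) = fa b m p" using t(2) s_s[OF i, of p] by simp
    moreover have "fa (fst (\<tau> u)) (snd (\<tau> u)) z = fa b m (s i z)" using t(2) by simp
    ultimately show "w \<in> E (s i p) z" using t(1) bm(3) u(2) by (cases "\<tau> u") (auto simp: E_def)
  qed
  have fip: "fi i p > 0" using pA i A_iff by blast
  have fisp: "fi i (s i p) < 0" using fi_s[OF i, of p] fip by simp
  have sub2: "E (s i p) z \<subseteq> E p z - {(alpha i, dl i)}"
  proof
    fix u assume "u \<in> E (s i p) z"
    then obtain b m where u: "u = (b, m)" "b \<in> R" "fa b m z * fa b m (s i p) < 0" by (auto simp: E_def)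
    have nzsp: "fa b m (s i p) \<noteq> 0" using u(3) by auto
    have nzp: "fa b m p \<noteq> 0" using fa_A[OF u(2) pA pA] by blast
    have notpm: "\<not> ((b = alpha i \<and> m = dl i) \<or> (b = - alpha i \<and> m = - dl i))"
    proof
      assume "(b = alpha i \<and> m = dl i) \<or> (b = - alpha i \<and> m = - dl i)"
      moreover have "0 < fi i z * fi i (s i p)" using z fisp by (simp add: mult_neg_neg)
      ultimately show False using u(3) by (auto simp: fa_def algebra_simps)
    qed
    then have "(fa b m p > 0) = (fa b m (s i p) > 0)" using pp u(2) by blast
    then have "fa b m z * fa b m p < 0" using u(3) nzsp nzp prod_neg_cong by metis
    then show "u \<in> E p z - {(alpha i, dl i)}" using u notpm by (auto simp: E_def)
  qed
  have mem: "(alpha i, dl i) \<in> E p z" using z fip alphaR[OF i] by (simp add: E_def mult_neg_pos)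
  have "card (E p (s i z)) = card (\<tau> ` E p (s i z))" using card_image[OF inj] by simp
  also have "\<dots> \<le> card (E p z - {(alpha i, dl i)})"
    using sub1 sub2 E_fin by (intro card_mono) auto
  also have "\<dots> < card (E p z)" by (rule card_Diff1_less[OF E_fin mem])
  finally show ?thesis using pA by blast
qed

lemma cover: "\<exists>ws x. set ws \<subseteq> {..l} \<and> x \<in> Cl \<and> z = ev ws x"
proof -
  obtain p0 where p0: "p0 \<in> A" using A_ne by blast
  show ?thesis
  proof (induction "card (E p0 z)" arbitrary: z rule: less_induct)
    case less
    show ?case
    proof (cases "z \<in> Cl")
      case True then show ?thesis by (intro exI[of _ "[]"] exI[of _ z]) auto
    next
      case False
      then obtain i where i: "i \<le> l" "fi i z < 0" by (auto simp: Cl_def not_le)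
      obtain p where p: "p \<in> A" "card (E p (s i z)) < card (E p z)" using E_step[OF i] by blast
      then have "card (E p0 (s i z)) < card (E p0 z)" using E_indep[OF p(1) p0] by simp
      then obtain ws x where ws: "set ws \<subseteq> {..l}" "x \<in> Cl" "s i z = ev ws x" using less by blast
      have "ev (i # ws) x = z" using ws(3)[symmetric] s_s[OF i(1), of z] by simp
      then show ?thesis using ws i by (intro exI[of _ "i # ws"] exI[of _ x]) auto
    qed
  qed
qed

lemma Cl_closure: "Cl \<subseteq> closure A"
proof
  fix x assume x: "x \<in> Cl"
  obtain p where p: "p \<in> A" using A_ne by blast
  show "x \<in> closure A"
    unfolding closure_approachable
  proof (intro allI impI)
    fix e :: real assume e: "e > 0"
    define n where "n = norm (p - x)"
    define t where "t = min 1 (e / (2 * (n + 1)))"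
    have n0: "n \<ge> 0" by (simp add: n_def)
    have t: "0 < t" "t \<le> 1" using e n0 by (auto simp: t_def)
    have "dist (x + t *\<^sub>R (p - x)) x = t * n" using t by (simp add: dist_norm n_def)
    also have "\<dots> \<le> e / (2 * (n + 1)) * n" using n0 by (intro mult_right_mono) (auto simp: t_def)
    also have "\<dots> = e * (n / (2 * (n + 1)))" by simp
    also have "\<dots> < e * 1"
    proof -
      have "n / (2 * (n + 1)) < 1" using n0 by (simp add: field_simps)
      then show ?thesis using e by (intro mult_strict_left_mono) auto
    qed
    finally show "\<exists>y\<in>A. dist y x < e" using seg_A[OF x p t] by auto
  qed
qed

end



theorem theorem3:
  fixes R :: "'a::euclidean_space set"
    and alpha :: "nat \<Rightarrow> 'a" and amax :: 'a and l :: nat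
    and S :: "'a \<Rightarrow> 'a"
  assumes "root_system R" and "irreducible_rs R"
    and "l = DIM('a)"
    and "simple_roots R l alpha"
    and "highest_root R l alpha amax"
    and "alpha 0 = - amax"
    and "linear S" and "onorm S < 1"
  shows "(\<forall>w1\<in>affine_weyl alpha l. \<forall>w2\<in>affine_weyl alpha l. w1 \<noteq> w2 \<longrightarrow>
            ((\<lambda>x. S x - w1 x) ` alcove alpha l) \<inter> ((\<lambda>x. S x - w2 x) ` alcove alpha l) = {})
       \<and> UNIV = (\<Union>w\<in>affine_weyl alpha l. closure ((\<lambda>x. S x - w x) ` alcove alpha l))"
proof -
  interpret aw R alpha amax l by unfold_locales (use assms in auto)
  have lin: "bounded_linear S" using assms(7) by (simp add: linear_conv_bounded_linear)
  have on0: "onorm S \<ge> 0" by (rule onorm_pos_le[OF lin])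
  have Sn: "norm (S v) \<le> onorm S * norm v" for v by (rule onorm[OF lin])
  have Sdiff: "S a - S b = S (a - b)" for a b using assms(7) by (simp add: linear_diff)
  have inv: "ev ws (ev (rev ws) y) = y" if "set ws \<subseteq> {..l}" for ws y
    using ev_rev[of "rev ws" y] that by simp
  have disj: "\<forall>w1\<in>affine_weyl alpha l. \<forall>w2\<in>affine_weyl alpha l. w1 \<noteq> w2 \<longrightarrow>
            ((\<lambda>x. S x - w1 x) ` A) \<inter> ((\<lambda>x. S x - w2 x) ` A) = {}"
  proof (intro ballI impI)
    fix w1 w2 assume w1: "w1 \<in> affine_weyl alpha l" and w2: "w2 \<in> affine_weyl alpha l" and ne: "w1 \<noteq> w2"
    obtain ws1 where ws1: "set ws1 \<subseteq> {..l}" "w1 = ev ws1" using w1 affine_weyl_char by blast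
    obtain ws2 where ws2: "set ws2 \<subseteq> {..l}" "w2 = ev ws2" using w2 affine_weyl_char by blast
    define u where "u = rev ws2 @ ws1"
    have u: "set u \<subseteq> {..l}" using ws1 ws2 by (auto simp: u_def)
    have eu: "ev u y = ev (rev ws2) (w1 y)" for y by (simp add: u_def evw_append ws1)
    have w2u: "w2 (ev u y) = w1 y" for y using inv[OF ws2(1)] eu ws2(2) by simp
    show "((\<lambda>x. S x - w1 x) ` A) \<inter> ((\<lambda>x. S x - w2 x) ` A) = {}"
    proof (rule ccontr)
      assume "((\<lambda>x. S x - w1 x) ` A) \<inter> ((\<lambda>x. S x - w2 x) ` A) \<noteq> {}"
      then obtain x1 x2 where x1: "x1 \<in> A" and x2: "x2 \<in> A" and eq: "S x1 - w1 x1 = S x2 - w2 x2"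
        by auto
      have "dist x1 x2 \<le> dist (ev u x1) x2" using K_gen[OF u] x1 x2 A_Cl by blast
      also have "\<dots> = dist (w2 (ev u x1)) (w2 x2)" using ev_dist[OF ws2(1)] ws2(2) by simp
      also have "\<dots> = dist (w1 x1) (w2 x2)" using w2u by simp
      also have "\<dots> = norm (S (x1 - x2))"
      proof -
        have "w1 x1 - w2 x2 = S x1 - (S x1 - w1 x1) - w2 x2" by simp
        also have "\<dots> = S x1 - (S x2 - w2 x2) - w2 x2" using eq by simp
        also have "\<dots> = S (x1 - x2)" using Sdiff[of x1 x2] by simp
        finally show ?thesis by (simp add: dist_norm)
      qed
      also have "\<dots> \<le> onorm S * dist x1 x2" using Sn by (simp add: dist_norm)
      finally have "dist x1 x2 \<le> onorm S * dist x1 x2" .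
      then have "dist x1 x2 = 0"
      proof (rule contrapos_pp)
        assume "dist x1 x2 \<noteq> 0"
        then have "dist x1 x2 > 0" by simp
        then have "onorm S * dist x1 x2 < 1 * dist x1 x2" using assms(8) by (intro mult_strict_right_mono)
        then show "\<not> dist x1 x2 \<le> onorm S * dist x1 x2" by simp
      qed
      then have x12: "x1 = x2" by simp
      then have "w1 x1 = w2 x1" using eq by simp
      then have "ev u x1 = x1" using eu ev_rev[OF ws2(1)] ws2(2) by simp
      then have "ev u = id" using T_stab[OF u x1] x1 by simp
      then have "w1 = w2" using w2u by (metis id_apply ext)
      then show False using ne by simp
    qed
  qed
  have Fex: "\<exists>x. x \<in> Cl \<and> (\<exists>ws. set ws \<subseteq> {..l} \<and> z = ev ws x)" for z using cover[of z] by blast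
  define F where "F z = (SOME x. x \<in> Cl \<and> (\<exists>ws. set ws \<subseteq> {..l} \<and> z = ev ws x))" for z
  have Fz: "F z \<in> Cl \<and> (\<exists>ws. set ws \<subseteq> {..l} \<and> z = ev ws (F z))" for z
    unfolding F_def by (rule someI_ex) (rule Fex)
  have Flip: "dist (F z) (F z') \<le> dist z z'" for z z'
  proof -
    obtain ws where ws: "set ws \<subseteq> {..l}" "z = ev ws (F z)" using Fz by blast
    obtain ws' where ws': "set ws' \<subseteq> {..l}" "z' = ev ws' (F z')" using Fz by blast
    have r: "set (rev ws') \<subseteq> {..l}" using ws' by simp
    have "dist (F z) (F z') \<le> dist (ev (rev ws' @ ws) (F z)) (F z')"
      using K_gen[of "rev ws' @ ws"] ws ws' Fz by auto
    also have "\<dots> = dist (ev (rev ws') z) (ev (rev ws') z')"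
    proof -
      have e1: "ev (rev ws') z' = F z'" by (metis ev_rev[OF ws'(1)] ws'(2))
      have e2: "ev (rev ws' @ ws) (F z) = ev (rev ws') z" by (metis evw_append comp_apply ws(2))
      show ?thesis unfolding e1 e2 ..
    qed
    also have "\<dots> = dist z z'" by (rule ev_dist[OF r])
    finally show ?thesis .
  qed
  have cov: "y \<in> (\<Union>w\<in>affine_weyl alpha l. closure ((\<lambda>x. S x - w x) ` A))" for y
  proof -
    define G where "G z = S (F z) - y" for z
    have "\<exists>!z. G z = z"
    proof (rule banach_fix_type[OF on0 assms(8)], intro allI)
      fix z z'
      have "dist (G z) (G z') = norm (S (F z - F z'))" by (simp add: G_def dist_norm Sdiff[symmetric])
      also have "\<dots> \<le> onorm S * dist (F z) (F z')" using Sn by (simp add: dist_norm)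
      also have "\<dots> \<le> onorm S * dist z z'" using Flip on0 by (intro mult_left_mono) auto
      finally show "dist (G z) (G z') \<le> onorm S * dist z z'" .
    qed
    then obtain z where z: "S (F z) - y = z" unfolding G_def by blast
    obtain ws where ws: "set ws \<subseteq> {..l}" "z = ev ws (F z)" using Fz by blast
    define x0 where "x0 = F z"
    have zx0: "z = ev ws x0" unfolding x0_def by (rule ws(2))
    have z0: "S x0 - y = z" unfolding x0_def by (rule z)
    have yeq: "y = S x0 - ev ws x0"
    proof -
      have "y = S x0 - (S x0 - y)" by simp
      also have "\<dots> = S x0 - ev ws x0" unfolding z0 by (rule arg_cong[OF zx0])
      finally show ?thesis .
    qed
    have FA: "x0 \<in> closure A" using Fz Cl_closure unfolding x0_def by blast
    have cont: "continuous_on (closure A) (\<lambda>x. S x - ev ws x)"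
      by (intro continuous_on_diff linear_continuous_on[OF lin] continuous_on_subset[OF ev_cont[OF ws(1)]]) auto
    have "(\<lambda>x. S x - ev ws x) ` closure A \<subseteq> closure ((\<lambda>x. S x - ev ws x) ` A)"
      by (rule image_closure_subset[OF cont closed_closure closure_subset])
    then have "y \<in> closure ((\<lambda>x. S x - ev ws x) ` A)" using FA yeq by blast
    moreover have "ev ws \<in> affine_weyl alpha l" using affine_weyl_char ws(1) by blast
    ultimately show ?thesis by (rule UN_I[rotated])
  qed
  have "UNIV = (\<Union>w\<in>affine_weyl alpha l. closure ((\<lambda>x. S x - w x) ` A))"
  proof (rule set_eqI)
    fix y show "y \<in> UNIV \<longleftrightarrow> y \<in> (\<Union>w\<in>affine_weyl alpha l. closure ((\<lambda>x. S x - w x) ` A))"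
      by (simp only: UNIV_I cov simp_thms)
  qed
  with disj show ?thesis by (rule conjI)
qed


end
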